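(* Let $\mathbb{F}$ be a field, $\mathbb{F}(T)$ the field of rational functions in $T$, and $H=\{h\in\mathbb{F}(T)\mid h \text{ is defined at } 1 \text{ and } h(1)=1\}$. Let $G$ be the set of matrices $\begin{pmatrix}1&f\\0&h\end{pmatrix}$ with $f\in\mathbb{F}(T)$, $h\in H$. Then $G$ is a group under matrix multiplication, the center of $G$ is trivial (so $G$ is not nilpotent), and $[e]_g$ is a subgroup of $G$ for every $g\in G$.
   Context: For $g\in G$, $[e]_g=\{[x,g]\mid x\in G\}$ with $[x,y]=x^{-1}y^{-1}xy$; this is the twisted conjugacy class of the unit element for the inner automorphism $x\mapsto g^{-1}xg$. *)

theory Defs
  imports "HOL-Analysis.Analysis" "HOL-Computational_Algebra.Polynomial"
    "HOL-Computational_Algebra.Fraction_Field" "HOL-Algebra.Group"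
begin

text \<open>H: rational functions defined at 1 with value 1 there; h is defined at 1 iff
  it has a representation p/q with q(1) \<noteq> 0, and then h(1) = p(1)/q(1).\<close>
definition H_set :: "'a::field poly fract set" where
  "H_set = {h. \<exists>p q. q \<noteq> 0 \<and> poly q 1 \<noteq> 0 \<and> h = Fract p q \<and> poly p 1 / poly q 1 = 1}"

definition mat2 :: "'a::field poly fract \<Rightarrow> 'a poly fract \<Rightarrow> 'a poly fract ^ 2 ^ 2" where
  "mat2 f h = vector [vector [1, f], vector [0, h]]"

definition G_grp :: "('a::field poly fract ^ 2 ^ 2) monoid" where
  "G_grp = \<lparr> carrier = {mat2 f h | f h. h \<in> H_set}, mult = (\<lambda>A B. A ** B), one = mat 1 \<rparr>"

definition center :: "('b, 'c) monoid_scheme \<Rightarrow> 'b set" where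
  "center G = {z \<in> carrier G. \<forall>x \<in> carrier G. z \<otimes>\<^bsub>G\<^esub> x = x \<otimes>\<^bsub>G\<^esub> z}"

definition commutator :: "('b, 'c) monoid_scheme \<Rightarrow> 'b \<Rightarrow> 'b \<Rightarrow> 'b" where
  "commutator G x y = inv\<^bsub>G\<^esub> x \<otimes>\<^bsub>G\<^esub> inv\<^bsub>G\<^esub> y \<otimes>\<^bsub>G\<^esub> x \<otimes>\<^bsub>G\<^esub> y"

text \<open>Twisted conjugacy class of the unit for the inner automorphism by g.\<close>
definition unit_class :: "('b, 'c) monoid_scheme \<Rightarrow> 'b \<Rightarrow> 'b set" where
  "unit_class G g = {commutator G x g | x. x \<in> carrier G}"

end

theory Submission imports Defs begin

lemma mat2_mult: "mat2 f h ** mat2 f' h' = mat2 (f' + f*h') (h*h')"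
  unfolding mat2_def
  by (simp add: matrix_matrix_mult_def sum_2 vec_eq_iff forall_2 vector_2)

lemma mat2_one: "mat 1 = mat2 0 1"
  unfolding mat2_def by (simp add: mat_def vec_eq_iff forall_2)

lemma mat2_eq: "mat2 f h = mat2 f' h' \<longleftrightarrow> f = f' \<and> h = h'"
  unfolding mat2_def by (auto simp add: vec_eq_iff forall_2)

lemma H_iff: "h \<in> H_set \<longleftrightarrow> (\<exists>p q. q \<noteq> 0 \<and> poly q 1 \<noteq> 0 \<and> h = Fract p q \<and> poly p 1 = poly q 1)"
  unfolding H_set_def by auto

lemma H_one: "1 \<in> H_set"
  unfolding H_iff by (rule exI[of _ 1], rule exI[of _ 1]) (simp add: One_fract_def)

lemma H_mult: assumes "u \<in> H_set" "v \<in> H_set" shows "u * v \<in> H_set"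
proof -
  obtain p q where a: "q \<noteq> 0" "poly q 1 \<noteq> 0" "u = Fract p q" "poly p 1 = poly q 1"
    using assms(1) unfolding H_iff by blast
  obtain p' q' where b: "q' \<noteq> 0" "poly q' 1 \<noteq> 0" "v = Fract p' q'" "poly p' 1 = poly q' 1"
    using assms(2) unfolding H_iff by blast
  show ?thesis unfolding H_iff
    by (intro exI[of _ "p*p'"] exI[of _ "q*q'"]) (simp add: a b)
qed

lemma H_inv: assumes "u \<in> H_set" shows "inverse u \<in> H_set"
proof -
  obtain p q where a: "q \<noteq> 0" "poly q 1 \<noteq> 0" "u = Fract p q" "poly p 1 = poly q 1"
    using assms(1) unfolding H_iff by blast
  have "p \<noteq> 0" using a by auto
  then show ?thesis unfolding H_iff
    by (intro exI[of _ "q"] exI[of _ "p"]) (simp add: a)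
qed

lemma H_nz: assumes "u \<in> H_set" shows "u \<noteq> 0"
proof
  assume u: "u = 0"
  obtain p q where a: "q \<noteq> 0" "poly q 1 \<noteq> 0" "u = Fract p q" "poly p 1 = poly q 1"
    using assms(1) unfolding H_iff by blast
  have "Fract p q = Fract 0 1" using u a Zero_fract_def by simp
  then have "p = 0" using a(1) eq_fract(1)[of q 1 p 0] by simp
  then show False using a by simp
qed

lemma H_aff: assumes "u \<in> H_set" "v \<in> H_set" shows "u + v - 1 \<in> H_set"
proof -
  obtain p q where a: "q \<noteq> 0" "poly q 1 \<noteq> 0" "u = Fract p q" "poly p 1 = poly q 1"
    using assms(1) unfolding H_iff by blast
  obtain p' q' where b: "q' \<noteq> 0" "poly q' 1 \<noteq> 0" "v = Fract p' q'" "poly p' 1 = poly q' 1"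
    using assms(2) unfolding H_iff by blast
  have "u + v - 1 = Fract p q + Fract p' q' - Fract 1 1"
    by (simp only: a b fract_collapse)
  also have "\<dots> = Fract (p*q' + p'*q) (q*q') - Fract 1 1"
    using add_fract[OF a(1) b(1), of p p'] by (rule arg_cong)
  also have "\<dots> = Fract ((p*q' + p'*q)*1 - 1*(q*q')) ((q*q')*1)"
    using a b by (intro diff_fract) simp_all
  finally have e: "u + v - 1 = Fract (p*q' + p'*q - q*q') (q*q')"
    by (simp only: mult_1_left mult_1_right)
  show ?thesis unfolding H_iff
    by (intro exI[of _ "p*q' + p'*q - q*q'"] exI[of _ "q*q'"] conjI e) (simp_all add: a(1,2,4) b(1,2,4))
qed

lemma H_neg: assumes "u \<in> H_set" shows "2 - u \<in> H_set"
proof -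
  obtain p q where a: "q \<noteq> 0" "poly q 1 \<noteq> 0" "u = Fract p q" "poly p 1 = poly q 1"
    using assms(1) unfolding H_iff by blast
  have t: "(2::'a poly fract) = Fract 2 1"
    by (metis of_nat_fract of_nat_numeral)
  have "2 - u = Fract 2 1 - Fract p q"
    by (simp only: a t)
  also have "\<dots> = Fract (2*q - p*1) (1*q)"
    using a by (intro diff_fract) simp_all
  finally have e: "2 - u = Fract (2*q - p) q"
    by (simp only: mult_1_left mult_1_right)
  show ?thesis unfolding H_iff
    by (intro exI[of _ "2*q - p"] exI[of _ "q"] conjI a(1) a(2) e) (simp add: a(4))
qed

lemma H_T1: "Fract [:0,1:] 1 \<in> H_set"
  unfolding H_iff by (intro exI[of _ "[:0,1:]"] exI[of _ 1]) simp

lemma H_T2: "Fract [:0,1::'a::field:] 1 \<noteq> 1"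
proof
  assume "Fract [:0,1::'a::field:] 1 = 1"
  then have "Fract [:0,1::'a::field:] 1 = Fract 1 1" by (simp only: fract_collapse)
  then have "[:0,1::'a:] = 1" using eq_fract(1)[of 1 1 "[:0,1::'a:]" 1] by simp
  then have "poly [:0,1::'a:] 0 = poly 1 0" by simp
  then show False by simp
qed

lemma carrier_G: "x \<in> carrier G_grp \<longleftrightarrow> (\<exists>f h. x = mat2 f h \<and> h \<in> H_set)"
  unfolding G_grp_def by auto

lemma mult_G: "x \<otimes>\<^bsub>G_grp\<^esub> y = x ** y" and one_G: "\<one>\<^bsub>G_grp\<^esub> = mat2 0 1"
  unfolding G_grp_def by (simp_all add: mat2_one)

lemma mat2_in: "h \<in> H_set \<Longrightarrow> mat2 f h \<in> carrier G_grp"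
  unfolding carrier_G by blast

lemma group_G: "group (G_grp :: ('a::field poly fract ^ 2 ^ 2) monoid)"
proof (rule groupI)
  fix x y :: "'a poly fract ^ 2 ^ 2"
  assume "x \<in> carrier G_grp" "y \<in> carrier G_grp"
  then show "x \<otimes>\<^bsub>G_grp\<^esub> y \<in> carrier G_grp"
    unfolding carrier_G mult_G by (auto simp: mat2_mult) (blast intro: H_mult)
next
  show "\<one>\<^bsub>G_grp\<^esub> \<in> carrier (G_grp :: ('a::field poly fract ^ 2 ^ 2) monoid)"
    unfolding one_G by (rule mat2_in[OF H_one])
next
  fix x y z :: "'a poly fract ^ 2 ^ 2"
  show "x \<otimes>\<^bsub>G_grp\<^esub> y \<otimes>\<^bsub>G_grp\<^esub> z = x \<otimes>\<^bsub>G_grp\<^esub> (y \<otimes>\<^bsub>G_grp\<^esub> z)"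
    unfolding mult_G by (simp add: matrix_mul_assoc)
next
  fix x :: "'a poly fract ^ 2 ^ 2"
  assume "x \<in> carrier G_grp"
  then show "\<one>\<^bsub>G_grp\<^esub> \<otimes>\<^bsub>G_grp\<^esub> x = x"
    unfolding carrier_G mult_G one_G by (auto simp: mat2_mult)
next
  fix x :: "'a poly fract ^ 2 ^ 2"
  assume "x \<in> carrier G_grp"
  then obtain f h where x: "x = mat2 f h" "h \<in> H_set" unfolding carrier_G by blast
  have "h \<noteq> 0" using H_nz x by blast
  then have "mat2 (- f / h) (inverse h) \<otimes>\<^bsub>G_grp\<^esub> x = \<one>\<^bsub>G_grp\<^esub>"
    unfolding mult_G one_G x mat2_mult by (simp add: mat2_eq)
  moreover have "mat2 (- f / h) (inverse h) \<in> carrier G_grp"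
    by (rule mat2_in[OF H_inv[OF x(2)]])
  ultimately show "\<exists>y\<in>carrier G_grp. y \<otimes>\<^bsub>G_grp\<^esub> x = \<one>\<^bsub>G_grp\<^esub>" by blast
qed

lemma inv_G: assumes "h \<in> H_set"
  shows "inv\<^bsub>G_grp\<^esub> (mat2 f h :: 'a::field poly fract ^ 2 ^ 2) = mat2 (- f / h) (inverse h)"
proof (rule group.inv_equality[OF group_G])
  have "h \<noteq> 0" using H_nz assms by blast
  then show "mat2 (- f / h) (inverse h) \<otimes>\<^bsub>G_grp\<^esub> (mat2 f h :: 'a::field poly fract ^ 2 ^ 2) = \<one>\<^bsub>G_grp\<^esub>"
    unfolding mult_G one_G mat2_mult by (simp add: mat2_eq)
  show "mat2 f h \<in> carrier G_grp" by (rule mat2_in[OF assms])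
  show "mat2 (- f / h) (inverse h) \<in> carrier G_grp"
    by (rule mat2_in[OF H_inv[OF assms]])
qed

lemma comm_G: assumes "u \<in> H_set" "v \<in> H_set"
  shows "commutator G_grp (mat2 a u :: 'a::field poly fract ^ 2 ^ 2) (mat2 b v)
         = mat2 (a*(v-1) - b*(u-1)) 1"
proof -
  have "u \<noteq> 0" "v \<noteq> 0" using H_nz assms by blast+
  then show ?thesis
    unfolding commutator_def inv_G[OF assms(1)] inv_G[OF assms(2)] mult_G mat2_mult
    by (simp add: mat2_eq field_simps)
qed

theorem mainTheorem16:
  shows "group (G_grp :: ('a::field poly fract ^ 2 ^ 2) monoid)
    \<and> center (G_grp :: ('a::field poly fract ^ 2 ^ 2) monoid) = {\<one>\<^bsub>G_grp\<^esub>}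
    \<and> (\<forall>g \<in> carrier (G_grp :: ('a::field poly fract ^ 2 ^ 2) monoid).
          subgroup (unit_class G_grp g) G_grp)"
proof (intro conjI ballI)
  show "group (G_grp :: ('a::field poly fract ^ 2 ^ 2) monoid)" by (rule group_G)
next
  show "center (G_grp :: ('a::field poly fract ^ 2 ^ 2) monoid) = {\<one>\<^bsub>G_grp\<^esub>}"
  proof
    show "{\<one>\<^bsub>G_grp\<^esub>} \<subseteq> center (G_grp :: ('a::field poly fract ^ 2 ^ 2) monoid)"
      unfolding center_def using group.is_monoid[OF group_G] by (auto simp: monoid.l_one monoid.r_one)
  next
    show "center (G_grp :: ('a::field poly fract ^ 2 ^ 2) monoid) \<subseteq> {\<one>\<^bsub>G_grp\<^esub>}"
    proof
      fix z :: "'a poly fract ^ 2 ^ 2"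
      assume z: "z \<in> center G_grp"
      then obtain f h where zf: "z = mat2 f h" "h \<in> H_set" unfolding center_def carrier_G by blast
      have c: "z ** x = x ** z" if "x \<in> carrier G_grp" for x
        using z that unfolding center_def mult_G by blast
      have "mat2 f h ** mat2 1 1 = mat2 1 1 ** mat2 f h"
        using c[OF mat2_in[OF H_one]] zf by simp
      then have h1: "h = 1" by (simp add: mat2_mult mat2_eq)
      let ?T = "Fract [:0,1::'a:] 1"
      have "mat2 f h ** mat2 0 ?T = mat2 0 ?T ** mat2 f h"
        using c[OF mat2_in[OF H_T1]] zf by simp
      then have "f * ?T = f" by (simp add: mat2_mult mat2_eq)
      then have "f * (?T - 1) = 0" by (simp add: algebra_simps)
      moreover have "?T - 1 \<noteq> 0" using H_T2 by simp
      ultimately have "f = 0" by simp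
      then show "z \<in> {\<one>\<^bsub>G_grp\<^esub>}" using zf h1 by (simp add: one_G)
    qed
  qed
next
  fix g :: "'a poly fract ^ 2 ^ 2"
  assume "g \<in> carrier G_grp"
  then obtain b v where g: "g = mat2 b v" "v \<in> H_set" unfolding carrier_G by blast
  have UC: "unit_class G_grp g = {mat2 (a*(v-1) - b*(u-1)) 1 | a u. u \<in> H_set}"
    unfolding unit_class_def carrier_G g(1)
  proof (intro equalityI subsetI)
    fix x assume "x \<in> {commutator G_grp x (mat2 b v) |x. \<exists>f h. x = mat2 f h \<and> h \<in> H_set}"
    then obtain a u where "x = commutator G_grp (mat2 a u) (mat2 b v)" "u \<in> H_set" by blast
    then show "x \<in> {mat2 (a*(v-1) - b*(u-1)) 1 | a u. u \<in> H_set}"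
      using comm_G[OF _ g(2)] by blast
  next
    fix x assume "x \<in> {mat2 (a*(v-1) - b*(u-1)) 1 | a u. u \<in> H_set}"
    then obtain a u where xu: "x = mat2 (a*(v-1) - b*(u-1)) 1" "u \<in> H_set" by blast
    then have "x = commutator G_grp (mat2 a u) (mat2 b v)" using comm_G[OF xu(2) g(2)] by simp
    then show "x \<in> {commutator G_grp x (mat2 b v) |x. \<exists>f h. x = mat2 f h \<and> h \<in> H_set}"
      using xu(2) by blast
  qed
  show "subgroup (unit_class G_grp g) G_grp"
    unfolding UC
  proof (rule group.subgroupI[OF group_G])
    show "{mat2 (a*(v-1) - b*(u-1)) 1 | a u. u \<in> H_set} \<subseteq> carrier G_grp"
      using mat2_in[OF H_one] by blast
    show "{mat2 (a*(v-1) - b*(u-1)) 1 | a u. u \<in> H_set} \<noteq> {}"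
      using H_one by blast
  next
    fix x assume "x \<in> {mat2 (a*(v-1) - b*(u-1)) 1 | a u. u \<in> H_set}"
    then obtain a u where x: "x = mat2 (a*(v-1) - b*(u-1)) 1" "u \<in> H_set" by blast
    have "inv\<^bsub>G_grp\<^esub> x = mat2 ((-a)*(v-1) - b*((2-u)-1)) 1"
      unfolding x inv_G[OF H_one] by (simp add: mat2_eq algebra_simps)
    then show "inv\<^bsub>G_grp\<^esub> x \<in> {mat2 (a*(v-1) - b*(u-1)) 1 | a u. u \<in> H_set}"
      using H_neg[OF x(2)] by blast
  next
    fix x y assume "x \<in> {mat2 (a*(v-1) - b*(u-1)) 1 | a u. u \<in> H_set}"
      "y \<in> {mat2 (a*(v-1) - b*(u-1)) 1 | a u. u \<in> H_set}"
    then obtain a u a' u' where x: "x = mat2 (a*(v-1) - b*(u-1)) 1" "u \<in> H_set"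
      and y: "y = mat2 (a'*(v-1) - b*(u'-1)) 1" "u' \<in> H_set" by blast
    have "x \<otimes>\<^bsub>G_grp\<^esub> y = mat2 ((a+a')*(v-1) - b*((u+u'-1)-1)) 1"
      unfolding x y mult_G mat2_mult by (simp add: mat2_eq algebra_simps)
    then show "x \<otimes>\<^bsub>G_grp\<^esub> y \<in> {mat2 (a*(v-1) - b*(u-1)) 1 | a u. u \<in> H_set}"
      using H_aff[OF x(2) y(2)] by blast
  qed
qed

end
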